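(* Let $\{h_j,j\ge1\}$ be any orthonormal basis of $L^2[0,1]$, let $0\le x_1<x_2\le1$ and $\alpha>0$. Then $$\Big(\int_{x_1}^{x_2}h_j(x)^2\,dx\Big)^{1/2}>j^{-1/2-\alpha}$$ for infinitely many $j$. *)

theory Defs
  imports "HOL-Analysis.Analysis"
begin

definition sq_int01 :: "(real \<Rightarrow> real) \<Rightarrow> bool" where
  "sq_int01 f \<longleftrightarrow> set_borel_measurable lborel {0..1} f \<and>
     set_integrable lborel {0..1} (\<lambda>x. (f x)^2)"

definition inner01 :: "(real \<Rightarrow> real) \<Rightarrow> (real \<Rightarrow> real) \<Rightarrow> real" where
  "inner01 f g = (LINT x:{0..1}|lborel. f x * g x)"

definition ONB01 :: "(nat \<Rightarrow> real \<Rightarrow> real) \<Rightarrow> bool" where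
  "ONB01 h \<longleftrightarrow>
     (\<forall>j\<ge>1. sq_int01 (h j)) \<and>
     (\<forall>i\<ge>1. \<forall>j\<ge>1. inner01 (h i) (h j) = (if i = j then 1 else 0)) \<and>
     (\<forall>f. sq_int01 f \<and> (\<forall>j\<ge>1. inner01 f (h j) = 0) \<longrightarrow>
          (AE x in lborel. x \<in> {0..1} \<longrightarrow> f x = 0))"

end

theory Submission
  imports Defs
begin


lemma cs_int:
  fixes u v :: "'a \<Rightarrow> real"
  assumes [measurable]: "u \<in> borel_measurable M" "v \<in> borel_measurable M"
  and iu: "integrable M (\<lambda>x. (u x)^2)" and iv: "integrable M (\<lambda>x. (v x)^2)"
  shows cs_int_integrable: "integrable M (\<lambda>x. u x * v x)"
    and cs_int_le: "(\<integral>x. u x * v x \<partial>M)^2 \<le> (\<integral>x. (u x)^2 \<partial>M) * (\<integral>x. (v x)^2 \<partial>M)"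
proof -
  show iuv: "integrable M (\<lambda>x. u x * v x)"
  proof (rule Bochner_Integration.integrable_bound[where f="\<lambda>x. ((u x)^2 + (v x)^2)/2"])
    show "integrable M (\<lambda>x. ((u x)^2 + (v x)^2)/2)" using iu iv by auto
    show "AE x in M. norm (u x * v x) \<le> norm (((u x)^2 + (v x)^2)/2)"
    proof (rule AE_I2)
      fix x
      have "0 \<le> (\<bar>u x\<bar> - \<bar>v x\<bar>)^2" by simp
      then show "norm (u x * v x) \<le> norm (((u x)^2 + (v x)^2)/2)"
        by (simp add: power2_eq_square abs_mult algebra_simps)
    qed
  qed simp
  define A where "A = (\<integral>x. (u x)^2 \<partial>M)"
  define B where "B = (\<integral>x. u x * v x \<partial>M)"
  define C where "C = (\<integral>x. (v x)^2 \<partial>M)"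
  have q: "0 \<le> A + 2*t*B + t^2*C" for t
  proof -
    have "(\<integral>x. (u x + t * v x)^2 \<partial>M) = (\<integral>x. (u x)^2 + (2*t) * (u x * v x) + t^2 * (v x)^2 \<partial>M)"
      by (rule Bochner_Integration.integral_cong) (auto simp: power2_eq_square algebra_simps)
    also have "\<dots> = (\<integral>x. (u x)^2 + (2*t) * (u x * v x) \<partial>M) + (\<integral>x. t^2 * (v x)^2 \<partial>M)"
      using iu iv iuv by (intro Bochner_Integration.integral_add) auto
    also have "\<dots> = A + 2*t*B + t^2*C"
    proof -
      have "(\<integral>x. (u x)^2 + (2*t) * (u x * v x) \<partial>M) = A + (2*t)*B"
        unfolding A_def B_def
        by (subst Bochner_Integration.integral_add[OF iu]) (auto intro: iuv simp del: integral_add)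
      moreover have "(\<integral>x. t^2 * (v x)^2 \<partial>M) = t^2 * C" unfolding C_def by simp
      ultimately show ?thesis by simp
    qed
    finally have e: "(\<integral>x. (u x + t * v x)^2 \<partial>M) = A + 2*t*B + t^2*C" .
    have "0 \<le> (\<integral>x. (u x + t * v x)^2 \<partial>M)" by (rule integral_nonneg_AE) auto
    then show ?thesis using e by simp
  qed
  have C0: "0 \<le> C" unfolding C_def by (rule integral_nonneg_AE) auto
  show "B^2 \<le> A * C" unfolding B_def[symmetric] A_def[symmetric] C_def[symmetric]
  proof (cases "C = 0")
    case True
    show ?thesis
    proof (cases "B = 0")
      case False
      have "0 \<le> A + 2*(-(A+1)/(2*B))*B + (-(A+1)/(2*B))^2*C" by (rule q)
      then show ?thesis using False True by (simp add: field_simps)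
    qed (simp add: True)
  next
    case False
    then have Cp: "C > 0" using C0 by simp
    have "0 \<le> A + 2*(-B/C)*B + (-B/C)^2*C" by (rule q)
    then have "0 \<le> A*C - B^2" using Cp by (simp add: field_simps power2_eq_square)
    then show ?thesis by simp
  qed
qed

definition L2 :: "'a measure \<Rightarrow> ('a \<Rightarrow> real) \<Rightarrow> bool" where
  "L2 M u \<longleftrightarrow> u \<in> borel_measurable M \<and> integrable M (\<lambda>x. (u x)^2)"

lemma L2_prod: "L2 M u \<Longrightarrow> L2 M v \<Longrightarrow> integrable M (\<lambda>x. u x * v x)"
  unfolding L2_def by (intro cs_int_integrable) auto

lemma L2_cs: "L2 M u \<Longrightarrow> L2 M v \<Longrightarrow>
   (\<integral>x. u x * v x \<partial>M)^2 \<le> (\<integral>x. (u x)^2 \<partial>M) * (\<integral>x. (v x)^2 \<partial>M)"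
  unfolding L2_def by (intro cs_int_le) auto

lemma L2_abs: "L2 M u \<Longrightarrow> L2 M (\<lambda>x. \<bar>u x\<bar>)"
  unfolding L2_def by auto

lemma L2_add: assumes "L2 M u" "L2 M v" shows "L2 M (\<lambda>x. u x + v x)"
proof -
  have "integrable M (\<lambda>x. (u x)^2 + (v x)^2 + 2 * (u x * v x))"
    using assms L2_prod[OF assms] unfolding L2_def by auto
  then have "integrable M (\<lambda>x. (u x + v x)^2)"
    by (rule back_subst[where P="integrable M"]) (auto simp: power2_eq_square algebra_simps)
  then show ?thesis using assms unfolding L2_def by auto
qed

lemma L2_cmult: assumes "L2 M u" shows "L2 M (\<lambda>x. c * u x)"
proof -
  have "integrable M (\<lambda>x. c^2 * (u x)^2)" using assms unfolding L2_def by auto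
  moreover have "(\<lambda>x. c * u x) \<in> borel_measurable M" using assms unfolding L2_def
    by (intro borel_measurable_times) auto
  ultimately show ?thesis using assms unfolding L2_def by (simp add: power_mult_distrib)
qed

lemma L2_diff: assumes "L2 M u" "L2 M v" shows "L2 M (\<lambda>x. u x - v x)"
  using L2_add[OF assms(1) L2_cmult[OF assms(2), of "-1"]] by simp

lemma L2_sum: "(\<And>j. j \<in> D \<Longrightarrow> L2 M (u j)) \<Longrightarrow> L2 M (\<lambda>x. \<Sum>j\<in>D. u j x)"
proof (induction D rule: infinite_finite_induct)
  case (infinite A) then show ?case by (simp add: L2_def)
next
  case empty then show ?case by (simp add: L2_def)
next
  case (insert a A) then show ?case by (simp add: L2_add)
qed

lemma L2_sq_nonneg: fixes u :: "'a \<Rightarrow> real" shows "0 \<le> (\<integral>x. (u x)^2 \<partial>M)"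
  by (rule integral_nonneg_AE) auto

lemma L2_abs_prod_le: assumes "L2 M u" "L2 M v"
  shows "(\<integral>x. \<bar>u x * v x\<bar> \<partial>M) \<le> sqrt (\<integral>x. (u x)^2 \<partial>M) * sqrt (\<integral>x. (v x)^2 \<partial>M)"
proof -
  have "(\<integral>x. \<bar>u x\<bar> * \<bar>v x\<bar> \<partial>M)^2 \<le> (\<integral>x. \<bar>u x\<bar>^2 \<partial>M) * (\<integral>x. \<bar>v x\<bar>^2 \<partial>M)"
    using L2_cs[OF L2_abs[OF assms(1)] L2_abs[OF assms(2)]] .
  then have "(\<integral>x. \<bar>u x * v x\<bar> \<partial>M)^2 \<le> (\<integral>x. (u x)^2 \<partial>M) * (\<integral>x. (v x)^2 \<partial>M)"
    by (simp add: abs_mult)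
  then have "sqrt ((\<integral>x. \<bar>u x * v x\<bar> \<partial>M)^2) \<le> sqrt ((\<integral>x. (u x)^2 \<partial>M) * (\<integral>x. (v x)^2 \<partial>M))"
    using real_sqrt_le_mono by blast
  moreover have "0 \<le> (\<integral>x. \<bar>u x * v x\<bar> \<partial>M)" by (rule integral_nonneg_AE) auto
  ultimately show ?thesis by (simp add: real_sqrt_mult)
qed

lemma AE_summable_nonneg:
  fixes f :: "nat \<Rightarrow> 'a \<Rightarrow> real"
  assumes fi: "\<And>k. integrable M (f k)" and f0: "\<And>k x. 0 \<le> f k x"
    and sf: "summable (\<lambda>k. \<integral>x. f k x \<partial>M)"
  shows "AE x in M. summable (\<lambda>k. f k x)"
proof -
  have fm[measurable]: "\<And>k. f k \<in> borel_measurable M" using fi by auto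
  have "(\<integral>\<^sup>+x. (\<Sum>k. ennreal (f k x)) \<partial>M) = (\<Sum>k. \<integral>\<^sup>+x. ennreal (f k x) \<partial>M)"
    by (rule nn_integral_suminf) auto
  also have "\<dots> = (\<Sum>k. ennreal (\<integral>x. f k x \<partial>M))"
    by (intro arg_cong[where f=suminf] ext nn_integral_eq_integral fi) (auto simp: f0)
  also have "\<dots> = ennreal (\<Sum>k. \<integral>x. f k x \<partial>M)"
    by (rule suminf_ennreal2) (auto intro: sf integral_nonneg_AE simp: f0)
  finally have "(\<integral>\<^sup>+x. (\<Sum>k. ennreal (f k x)) \<partial>M) \<noteq> \<infinity>" by simp
  then have "AE x in M. (\<Sum>k. ennreal (f k x)) \<noteq> \<infinity>"
    by (intro nn_integral_PInf_AE) auto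
  then show ?thesis
    by eventually_elim (rule summable_suminf_not_top, auto simp: f0)
qed

lemma amgm_opt:
  fixes a W Q :: real
  assumes "\<And>t. t > 0 \<Longrightarrow> a \<le> (t * W + Q / t) / 2" "0 \<le> a" "0 < W" "0 \<le> Q"
  shows "a^2 \<le> W * Q"
proof (cases "a = 0")
  case True then show ?thesis using assms by simp
next
  case False
  then have ap: "a > 0" using assms by simp
  show ?thesis
  proof (cases "Q = 0")
    case True
    have "a \<le> ((a/W) * W + Q / (a/W)) / 2" using assms(1)[of "a/W"] ap assms(3) by simp
    then have "a \<le> a/2" using True assms(3) by simp
    then show ?thesis using ap by simp
  next
    case False
    then have Qp: "Q > 0" using assms by simp
    have "a \<le> ((Q/a) * W + Q / (Q/a)) / 2" using assms(1)[of "Q/a"] ap Qp by simp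
    then have "a \<le> (Q*W/a + a) / 2" using ap Qp by simp
    then have "2*a*a \<le> Q*W + a*a" using ap by (simp add: field_simps)
    then show ?thesis by (simp add: power2_eq_square algebra_simps)
  qed
qed

lemma amgm_t:
  fixes b w t :: real assumes "w > 0" "t > 0"
  shows "\<bar>b\<bar> \<le> (t * w + (b^2 / w) / t) / 2"
proof -
  have "0 \<le> (t*w - \<bar>b\<bar>)^2" by simp
  then have "2 * \<bar>b\<bar> * (t*w) \<le> (t*w)^2 + b^2" by (simp add: power2_eq_square algebra_simps)
  then show ?thesis using assms by (simp add: field_simps power2_eq_square)
qed

locale onbs =
  fixes M :: "'a measure" and H :: "nat \<Rightarrow> 'a \<Rightarrow> real"
  assumes HL2: "\<And>j. L2 M (H j)"
  and Ho: "\<And>i j. 1 \<le> i \<Longrightarrow> 1 \<le> j \<Longrightarrow> (\<integral>x. H i x * H j x \<partial>M) = (if i = j then 1 else 0)"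
begin

lemma sumH_L2: "L2 M (\<lambda>x. \<Sum>j\<in>D. c j * H j x)"
  by (intro L2_sum L2_cmult HL2)

lemma sumH_prod: assumes "finite D" "L2 M u"
  shows "(\<integral>x. (\<Sum>j\<in>D. c j * H j x) * u x \<partial>M) = (\<Sum>j\<in>D. c j * (\<integral>x. H j x * u x \<partial>M))"
proof -
  have "(\<integral>x. (\<Sum>j\<in>D. c j * H j x) * u x \<partial>M) = (\<integral>x. (\<Sum>j\<in>D. c j * (H j x * u x)) \<partial>M)"
    by (rule Bochner_Integration.integral_cong) (auto simp: sum_distrib_right mult.assoc)
  also have "\<dots> = (\<Sum>j\<in>D. (\<integral>x. c j * (H j x * u x) \<partial>M))"
    by (rule Bochner_Integration.integral_sum) (auto intro!: L2_prod HL2 assms)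
  also have "\<dots> = (\<Sum>j\<in>D. c j * (\<integral>x. H j x * u x \<partial>M))" by simp
  finally show ?thesis .
qed

lemma sumH_H: assumes "finite D" "D \<subseteq> {1..}" "1 \<le> m"
  shows "(\<integral>x. (\<Sum>j\<in>D. c j * H j x) * H m x \<partial>M) = (if m \<in> D then c m else 0)"
proof -
  have "(\<integral>x. (\<Sum>j\<in>D. c j * H j x) * H m x \<partial>M) = (\<Sum>j\<in>D. c j * (\<integral>x. H j x * H m x \<partial>M))"
    by (rule sumH_prod[OF assms(1) HL2])
  also have "\<dots> = (\<Sum>j\<in>D. if j = m then c j else 0)"
    by (rule sum.cong) (use assms in \<open>auto simp: Ho\<close>)
  also have "\<dots> = (if m \<in> D then c m else 0)" using assms(1) by (simp add: sum.delta')
  finally show ?thesis .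
qed

lemma sumH_sq: assumes "finite D" "D \<subseteq> {1..}"
  shows "(\<integral>x. (\<Sum>j\<in>D. c j * H j x)^2 \<partial>M) = (\<Sum>j\<in>D. (c j)^2)"
proof -
  have "(\<integral>x. (\<Sum>j\<in>D. c j * H j x)^2 \<partial>M) = (\<integral>x. (\<Sum>j\<in>D. c j * H j x) * (\<Sum>i\<in>D. c i * H i x) \<partial>M)"
    by (simp add: power2_eq_square)
  also have "\<dots> = (\<Sum>j\<in>D. c j * (\<integral>x. H j x * (\<Sum>i\<in>D. c i * H i x) \<partial>M))"
    by (rule sumH_prod[OF assms(1) sumH_L2])
  also have "\<dots> = (\<Sum>j\<in>D. c j * c j)"
  proof (rule sum.cong)
    fix j assume j: "j \<in> D"
    have "(\<integral>x. H j x * (\<Sum>i\<in>D. c i * H i x) \<partial>M) = (\<integral>x. (\<Sum>i\<in>D. c i * H i x) * H j x \<partial>M)"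
      by (simp add: mult.commute)
    also have "\<dots> = c j" using sumH_H[OF assms, of j c] j assms by auto
    finally show "c j * (\<integral>x. H j x * (\<Sum>i\<in>D. c i * H i x) \<partial>M) = c j * c j" by simp
  qed simp
  finally show ?thesis by (simp add: power2_eq_square)
qed


lemma parseval_block:
  fixes g :: "'a \<Rightarrow> real" and S :: "'a set"
  assumes gL2: "L2 M g"
  and complete: "\<And>f. L2 M f \<Longrightarrow> (\<forall>j\<ge>1. (\<integral>x. f x * H j x \<partial>M) = 0) \<Longrightarrow> AE x in M. x \<in> S \<longrightarrow> f x = 0"
  and gS: "\<And>x. x \<notin> S \<Longrightarrow> g x = 0"
  and summ: "summable (\<lambda>k. sqrt (\<Sum>j\<in>{2^k..<2^Suc k}. (\<integral>x. g x * H j x \<partial>M)^2))"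
  shows "(\<lambda>k. \<Sum>j\<in>{2^k..<2^Suc k}. (\<integral>x. g x * H j x \<partial>M)^2) sums (\<integral>x. (g x)^2 \<partial>M)"
proof -
  define c where "c j = (\<integral>x. g x * H j x \<partial>M)" for j
  define D where "D k = {(2::nat)^k..<2^Suc k}" for k
  define B where "B k x = (\<Sum>j\<in>D k. c j * H j x)" for k x
  define s where "s k = (\<Sum>j\<in>D k. (c j)^2)" for k
  define \<beta> where "\<beta> k = sqrt (s k)" for k
  have Dfin: "finite (D k)" for k unfolding D_def by simp
  have Dsub: "D k \<subseteq> {1..}" for k unfolding D_def by auto
  have BL2: "L2 M (B k)" for k unfolding B_def by (rule sumH_L2)
  have Bm[measurable]: "B k \<in> borel_measurable M" for k using BL2 unfolding L2_def by auto
  have s0: "0 \<le> s k" for k unfolding s_def by (auto intro: sum_nonneg)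
  have Bsq: "(\<integral>x. (B k x)^2 \<partial>M) = s k" for k
    unfolding B_def s_def by (rule sumH_sq[OF Dfin Dsub])
  have BH: "(\<integral>x. B k x * H m x \<partial>M) = (if m \<in> D k then c m else 0)" if "1 \<le> m" for k m
    unfolding B_def by (rule sumH_H[OF Dfin Dsub that])
  have Bg: "(\<integral>x. B k x * g x \<partial>M) = s k" for k
  proof -
    have "(\<integral>x. B k x * g x \<partial>M) = (\<Sum>j\<in>D k. c j * (\<integral>x. H j x * g x \<partial>M))"
      unfolding B_def by (rule sumH_prod[OF Dfin gL2])
    also have "\<dots> = s k" unfolding s_def c_def
      by (rule sum.cong) (auto simp: mult.commute power2_eq_square)
    finally show ?thesis .
  qed
  have sumb: "summable \<beta>" using summ unfolding \<beta>_def s_def D_def c_def .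
  have b0: "0 \<le> \<beta> k" for k unfolding \<beta>_def using s0[of k] by simp
  define w where "w k = \<beta> k + (1/2)^k" for k
  have wp: "0 < w k" for k unfolding w_def using b0[of k] by (simp add: add_nonneg_pos)
  have sumw: "summable w" unfolding w_def
    by (intro summable_add sumb summable_geometric) simp
  define W where "W = suminf w"
  have Wp: "0 < W" unfolding W_def
    using suminf_pos[OF sumw wp] by simp
  define q where "q k x = (B k x)^2 / w k" for k x
  have qi: "integrable M (q k)" for k using BL2[of k] unfolding q_def L2_def by auto
  have q0: "0 \<le> q k x" for k x unfolding q_def using wp[of k] by simp
  have qint: "(\<integral>x. q k x \<partial>M) = s k / w k" for k
    unfolding q_def using Bsq[of k] by simp
  have qle: "(\<integral>x. q k x \<partial>M) \<le> \<beta> k" for k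
  proof -
    have "s k = \<beta> k * \<beta> k" unfolding \<beta>_def using s0[of k] by simp
    also have "\<dots> \<le> \<beta> k * w k" unfolding w_def using b0[of k] by (intro mult_left_mono) auto
    finally show ?thesis unfolding qint using wp[of k] by (simp add: divide_le_eq)
  qed
  have sumq: "summable (\<lambda>k. \<integral>x. q k x \<partial>M)"
    by (rule summable_comparison_test'[OF sumb, of 0]) (use qle q0 in \<open>auto intro: integral_nonneg_AE\<close>)
  have AEq: "AE x in M. summable (\<lambda>k. q k x)"
    by (rule AE_summable_nonneg[OF qi q0 sumq])
  define Q where "Q x = (\<Sum>k. q k x)" for x
  have Qi: "integrable M Q" unfolding Q_def
    by (rule integrable_suminf[OF qi]) (use AEq sumq q0 in \<open>auto\<close>)
  have pw: "summable (\<lambda>k. \<bar>B k x\<bar>) \<and> (\<Sum>k. \<bar>B k x\<bar>)^2 \<le> W * Q x"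
    if sq: "summable (\<lambda>k. q k x)" for x
  proof -
    have bnd: "\<bar>B k x\<bar> \<le> (t * w k + q k x / t) / 2" if "t > 0" for t k
      unfolding q_def by (rule amgm_t[OF wp that])
    have sB: "summable (\<lambda>k. \<bar>B k x\<bar>)"
    proof (rule summable_comparison_test'[where g="\<lambda>k. (1 * w k + q k x / 1) / 2"])
      show "summable (\<lambda>k. (1 * w k + q k x / 1) / 2)"
        by (intro summable_divide summable_add summable_mult sumw sq)
      show "norm \<bar>B k x\<bar> \<le> (1 * w k + q k x / 1) / 2" for k using bnd[of 1 k] by simp
    qed
    have "(\<Sum>k. \<bar>B k x\<bar>)^2 \<le> W * Q x"
    proof (rule amgm_opt)
      show "(\<Sum>k. \<bar>B k x\<bar>) \<le> (t * W + Q x / t) / 2" if "t > 0" for t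
      proof -
        have sg: "summable (\<lambda>k. (t * w k + q k x / t) / 2)"
          by (intro summable_divide summable_add summable_mult sumw sq)
        have "(\<Sum>k. \<bar>B k x\<bar>) \<le> (\<Sum>k. (t * w k + q k x / t) / 2)"
          by (rule suminf_le[OF _ sB sg]) (use bnd that in auto)
        also have "\<dots> = (t * W + Q x / t) / 2"
        proof -
          have "(\<lambda>k. (t * w k + q k x / t) / 2) sums ((t * W + Q x / t) / 2)"
            unfolding W_def Q_def
            by (intro sums_divide sums_add sums_mult summable_sums sumw sq)
          then show ?thesis by (simp add: sums_iff)
        qed
        finally show ?thesis .
      qed
      show "0 \<le> (\<Sum>k. \<bar>B k x\<bar>)" by (rule suminf_nonneg[OF sB]) simp
      show "0 < W" by (rule Wp)
      show "0 \<le> Q x" unfolding Q_def by (rule suminf_nonneg[OF sq q0])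
    qed
    then show ?thesis using sB by simp
  qed
  have AEB: "AE x in M. summable (\<lambda>k. \<bar>B k x\<bar>)" using AEq by eventually_elim (use pw in auto)
  define F where "F x = (\<Sum>k. B k x)" for x
  have Fm[measurable]: "F \<in> borel_measurable M" unfolding F_def by measurable
  have FL2: "L2 M F" unfolding L2_def
  proof
    show "integrable M (\<lambda>x. (F x)^2)"
    proof (rule Bochner_Integration.integrable_bound[where f="\<lambda>x. W * Q x"])
      show "integrable M (\<lambda>x. W * Q x)" using Qi by simp
      show "AE x in M. norm ((F x)^2) \<le> norm (W * Q x)" using AEq
      proof eventually_elim
        case (elim x)
        from pw[OF elim] have sB: "summable (\<lambda>k. \<bar>B k x\<bar>)" and le: "(\<Sum>k. \<bar>B k x\<bar>)^2 \<le> W * Q x" by auto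
        have Fa: "\<bar>F x\<bar> \<le> (\<Sum>k. \<bar>B k x\<bar>)" unfolding F_def by (rule summable_rabs[OF sB])
        have "(F x)^2 \<le> (\<Sum>k. \<bar>B k x\<bar>)^2"
          using power_mono[OF Fa abs_ge_zero, of 2] by simp
        then show ?case using le by simp
      qed
    qed simp
  qed simp
  have swap: "(\<lambda>k. \<integral>x. B k x * u x \<partial>M) sums (\<integral>x. F x * u x \<partial>M)" if uL2: "L2 M u" for u
  proof -
    have "(\<lambda>k. \<integral>x. B k x * u x \<partial>M) sums (\<integral>x. (\<Sum>k. B k x * u x) \<partial>M)"
    proof (rule sums_integral)
      show "integrable M (\<lambda>x. B k x * u x)" for k by (rule L2_prod[OF BL2 uL2])
      show "AE x in M. summable (\<lambda>k. norm (B k x * u x))" using AEB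
        by eventually_elim (auto simp: abs_mult intro: summable_mult2)
      have le: "(\<integral>x. norm (B k x * u x) \<partial>M) \<le> \<beta> k * sqrt (\<integral>x. (u x)^2 \<partial>M)" for k
        using L2_abs_prod_le[OF BL2 uL2, of k] unfolding \<beta>_def Bsq by simp
      show "summable (\<lambda>k. \<integral>x. norm (B k x * u x) \<partial>M)"
        by (rule summable_comparison_test'[OF summable_mult2[OF sumb], of 0]) (use le in \<open>auto intro: integral_nonneg_AE\<close>)
    qed
    also have "(\<integral>x. (\<Sum>k. B k x * u x) \<partial>M) = (\<integral>x. F x * u x \<partial>M)"
    proof (rule integral_cong_AE)
      show "AE x in M. (\<Sum>k. B k x * u x) = F x * u x" using AEB
        by eventually_elim (simp add: F_def suminf_mult2 summable_rabs_cancel)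
    qed (use uL2 in \<open>auto simp: L2_def\<close>)
    finally show ?thesis .
  qed
  have FH: "(\<integral>x. F x * H m x \<partial>M) = c m" if m1: "1 \<le> m" for m
  proof -
    obtain k0 where k0: "2^k0 \<le> m" "m < 2^(k0+1)" using ex_power_ivl1[of 2 m] m1 by auto
    have "(\<lambda>k. \<integral>x. B k x * H m x \<partial>M) = (\<lambda>k. if k = k0 then c m else 0)"
    proof
      fix k
      have "m \<in> D k \<longleftrightarrow> k = k0"
      proof
        assume "m \<in> D k"
        then have a: "2^k \<le> m" "m < 2^Suc k" unfolding D_def by auto
        have "k < k0 + 1" using a(1) k0(2) by (metis le_less_trans power_less_imp_less_exp one_less_numeral_iff semiring_norm(76))
        moreover have "k0 < Suc k" using a(2) k0(1) by (metis le_less_trans power_less_imp_less_exp one_less_numeral_iff semiring_norm(76))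
        ultimately show "k = k0" by simp
      qed (use k0 in \<open>auto simp: D_def\<close>)
      then show "(\<integral>x. B k x * H m x \<partial>M) = (if k = k0 then c m else 0)" using BH[OF m1, of k] by simp
    qed
    moreover have "(\<lambda>k. if k = k0 then c m else 0) sums c m" using sums_single[of k0 "\<lambda>_. c m"] by simp
    ultimately have "(\<lambda>k. \<integral>x. B k x * H m x \<partial>M) sums c m" by simp
    then show ?thesis using swap[OF HL2[of m]] sums_unique2 by blast
  qed
  define f where "f x = g x - F x" for x
  have fL2: "L2 M f" unfolding f_def by (rule L2_diff[OF gL2 FL2])
  have "\<forall>j\<ge>1. (\<integral>x. f x * H j x \<partial>M) = 0"
  proof (intro allI impI)
    fix j :: nat assume j: "1 \<le> j"
    have "(\<integral>x. f x * H j x \<partial>M) = (\<integral>x. g x * H j x - F x * H j x \<partial>M)"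
      unfolding f_def by (simp add: algebra_simps)
    also have "\<dots> = c j - c j"
      using L2_prod[OF gL2 HL2] L2_prod[OF FL2 HL2] FH[OF j] unfolding c_def by simp
    finally show "(\<integral>x. f x * H j x \<partial>M) = 0" by simp
  qed
  then have AEf: "AE x in M. x \<in> S \<longrightarrow> f x = 0" by (rule complete[OF fL2])
  have "(\<integral>x. g x * f x \<partial>M) = 0"
  proof -
    have "(\<integral>x. g x * f x \<partial>M) = (\<integral>x. 0 \<partial>M)"
      by (rule integral_cong_AE) (use AEf gS fL2 gL2 in \<open>auto simp: L2_def elim!: eventually_mono\<close>)
    then show ?thesis by simp
  qed
  moreover have "(\<integral>x. g x * f x \<partial>M) = (\<integral>x. (g x)^2 \<partial>M) - (\<integral>x. F x * g x \<partial>M)"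
  proof -
    have "(\<integral>x. g x * f x \<partial>M) = (\<integral>x. (g x)^2 - F x * g x \<partial>M)"
      unfolding f_def by (simp add: algebra_simps power2_eq_square)
    also have "\<dots> = (\<integral>x. (g x)^2 \<partial>M) - (\<integral>x. F x * g x \<partial>M)"
      using gL2 L2_prod[OF FL2 gL2] unfolding L2_def by simp
    finally show ?thesis .
  qed
  ultimately have eq: "(\<integral>x. F x * g x \<partial>M) = (\<integral>x. (g x)^2 \<partial>M)" by simp
  have "(\<lambda>k. s k) sums (\<integral>x. (g x)^2 \<partial>M)" using swap[OF gL2] unfolding Bg eq .
  then show ?thesis unfolding s_def D_def c_def .
qed
end


lemma onb_lborel:
  assumes onb: "ONB01 h"
  defines "H \<equiv> \<lambda>j x. if j = 0 then 0 else indicator {0..1::real} x * h j x"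
  shows "onbs lborel H"
    and "\<And>f. L2 lborel f \<Longrightarrow> (\<forall>j\<ge>1. (\<integral>x. f x * H j x \<partial>lborel) = 0) \<Longrightarrow>
           AE x in lborel. x \<in> {0..1} \<longrightarrow> f x = 0"
proof -
  have sq: "\<And>j. j \<ge> 1 \<Longrightarrow> sq_int01 (h j)" using onb unfolding ONB01_def by auto
  have ort: "\<And>i j. i \<ge> 1 \<Longrightarrow> j \<ge> 1 \<Longrightarrow> inner01 (h i) (h j) = (if i = j then 1 else 0)"
    using onb unfolding ONB01_def by auto
  have cpl: "\<And>f. sq_int01 f \<Longrightarrow> (\<forall>j\<ge>1. inner01 f (h j) = 0) \<Longrightarrow>
      (AE x in lborel. x \<in> {0..1} \<longrightarrow> f x = 0)"
    using onb unfolding ONB01_def by blast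
  have Hsq: "(H j x)^2 = (if j = 0 then 0 else indicator {0..1::real} x * (h j x)^2)" for j x
    unfolding H_def by (auto simp: indicator_def power2_eq_square)
  show "onbs lborel H"
  proof
    fix j
    show "L2 lborel (H j)"
    proof (cases "j = 0")
      case True then show ?thesis by (simp add: H_def L2_def)
    next
      case False
      then have "sq_int01 (h j)" using sq by simp
      then have m: "(\<lambda>x. indicator {0..1::real} x * h j x) \<in> borel_measurable lborel"
        and i: "integrable lborel (\<lambda>x. indicator {0..1::real} x * (h j x)^2)"
        unfolding sq_int01_def set_borel_measurable_def set_integrable_def by auto
      have e: "(\<lambda>x. (H j x)^2) = (\<lambda>x. indicator {0..1::real} x * (h j x)^2)" using False by (simp add: Hsq)
      have "H j = (\<lambda>x. indicator {0..1::real} x * h j x)" using False by (simp add: H_def)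
      then show ?thesis unfolding L2_def e using m i by simp
    qed
  next
    fix i j :: nat assume "1 \<le> i" "1 \<le> j"
    then have "inner01 (h i) (h j) = (if i = j then 1 else 0)" by (rule ort)
    moreover have "inner01 (h i) (h j) = (\<integral>x. H i x * H j x \<partial>lborel)"
      unfolding inner01_def set_lebesgue_integral_def using \<open>1 \<le> i\<close> \<open>1 \<le> j\<close>
      by (intro Bochner_Integration.integral_cong) (auto simp: H_def indicator_def)
    ultimately show "(\<integral>x. H i x * H j x \<partial>lborel) = (if i = j then 1 else 0)" by simp
  qed
  fix f assume fL2: "L2 lborel f" and orth: "\<forall>j\<ge>1. (\<integral>x. f x * H j x \<partial>lborel) = 0"
  have fm[measurable]: "f \<in> borel_measurable lborel" using fL2 unfolding L2_def by auto
  have "sq_int01 f" unfolding sq_int01_def set_borel_measurable_def set_integrable_def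
    using fL2 integrable_mult_indicator[of "{0..1::real}" lborel "\<lambda>x. (f x)^2"] unfolding L2_def by auto
  moreover have "\<forall>j\<ge>1. inner01 f (h j) = 0"
  proof (intro allI impI)
    fix j :: nat assume j: "1 \<le> j"
    have "inner01 f (h j) = (\<integral>x. f x * H j x \<partial>lborel)"
      unfolding inner01_def set_lebesgue_integral_def using j
      by (intro Bochner_Integration.integral_cong) (auto simp: H_def indicator_def)
    then show "inner01 f (h j) = 0" using orth j by simp
  qed
  ultimately show "AE x in lborel. x \<in> {0..1} \<longrightarrow> f x = 0" by (rule cpl)
qed


theorem mainTheorem14:
  fixes h :: "nat \<Rightarrow> real \<Rightarrow> real" and x1 x2 \<alpha> :: real
  assumes "ONB01 h"
    and "0 \<le> x1" and "x1 < x2" and "x2 \<le> 1"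
    and "\<alpha> > 0"
  shows "infinite {j::nat. j \<ge> 1 \<and>
           sqrt (LINT x:{x1..x2}|lborel. (h j x)^2) > real j powr (-1/2 - \<alpha>)}"
proof
  assume fin: "finite {j::nat. j \<ge> 1 \<and>
           sqrt (LINT x:{x1..x2}|lborel. (h j x)^2) > real j powr (-1/2 - \<alpha>)}"
  then obtain N0 where N0: "\<forall>j\<in>{j::nat. j \<ge> 1 \<and>
           sqrt (LINT x:{x1..x2}|lborel. (h j x)^2) > real j powr (-1/2 - \<alpha>)}. j \<le> N0"
    using finite_nat_set_iff_bounded_le by meson
  define N where "N = Suc N0"
  define H where "H \<equiv> \<lambda>j x. if j = 0 then 0 else indicator {0..1::real} x * h j x"
  have ons: "onbs lborel H" unfolding H_def by (rule onb_lborel(1)[OF assms(1)])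
  have cpl: "\<And>f. L2 lborel f \<Longrightarrow> (\<forall>j\<ge>1. (\<integral>x. f x * H j x \<partial>lborel) = 0) \<Longrightarrow>
           AE x in lborel. x \<in> {0..1} \<longrightarrow> f x = 0"
    unfolding H_def by (rule onb_lborel(2)[OF assms(1)])
  interpret onbs lborel H by (rule ons)
  define I where "I = {x1..x2}"
  have Isub: "I \<subseteq> {0..1}" unfolding I_def using assms by auto
  define a where "a j = (LINT x:I|lborel. (h j x)^2)" for j
  have a0: "0 \<le> a j" for j unfolding a_def set_lebesgue_integral_def
    by (rule integral_nonneg_AE) (auto simp: indicator_def)
  have aH: "a j = (\<integral>x. indicator I x * (H j x)^2 \<partial>lborel)" if "1 \<le> j" for j
    unfolding a_def set_lebesgue_integral_def using that Isub
    by (intro Bochner_Integration.integral_cong) (auto simp: H_def indicator_def)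
  have adecay: "a j \<le> real j powr (-1 - 2*\<alpha>)" if "N \<le> j" for j
  proof -
    have j1: "1 \<le> j" using that unfolding N_def by simp
    have "\<not> sqrt (a j) > real j powr (-1/2 - \<alpha>)"
    proof
      assume "sqrt (a j) > real j powr (-1/2 - \<alpha>)"
      then have "j \<in> {j::nat. j \<ge> 1 \<and>
           sqrt (LINT x:{x1..x2}|lborel. (h j x)^2) > real j powr (-1/2 - \<alpha>)}"
        using j1 unfolding a_def I_def by simp
      then have "j \<le> N0" using N0 by blast
      then show False using that unfolding N_def by simp
    qed
    then have le: "sqrt (a j) \<le> real j powr (-1/2 - \<alpha>)" by simp
    have "a j = sqrt (a j) * sqrt (a j)" using a0[of j] by simp
    also have "\<dots> \<le> real j powr (-1/2 - \<alpha>) * real j powr (-1/2 - \<alpha>)"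
      using le a0[of j] by (intro mult_mono) auto
    also have "\<dots> = real j powr (-1 - 2*\<alpha>)" by (simp add: powr_add[symmetric])
    finally show ?thesis .
  qed
  define D where "D k = {(2::nat)^k..<2^Suc k}" for k
  define A where "A k = (\<Sum>j\<in>D k. a j)" for k
  have A0: "0 \<le> A k" for k unfolding A_def by (auto intro: sum_nonneg a0)
  define r where "r = (2::real) powr (-2*\<alpha>)"
  have r0: "0 < r" unfolding r_def by simp
  have r1: "r < 1" unfolding r_def using assms(5)
    using powr_less_cancel_iff[of "2::real" "-2*\<alpha>" 0] by simp
  have Adecay: "A k \<le> r^k" if "N \<le> k" for k
  proof -
    define e where "e = -1 - 2*\<alpha>"
    have e0: "e \<le> 0" unfolding e_def using assms(5) by simp
    have "k < 2^k" by (rule less_exp)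
    have "A k \<le> (\<Sum>j\<in>D k. real (2^k) powr e)"
      unfolding A_def
    proof (rule sum_mono)
      fix j assume j: "j \<in> D k"
      then have "2^k \<le> j" unfolding D_def by simp
      then have "N \<le> j" using \<open>k < 2^k\<close> that by linarith
      then have "a j \<le> real j powr e" unfolding e_def by (rule adecay)
      also have "\<dots> \<le> real (2^k) powr e"
        by (rule powr_mono2'[OF e0]) (use \<open>2^k \<le> j\<close> in auto)
      finally show "a j \<le> real (2^k) powr e" .
    qed
    also have "\<dots> = real (2^k) * real (2^k) powr e"
      unfolding D_def by simp
    also have "\<dots> = 2 powr real k * (2 powr real k) powr e"
      using powr_realpow[of "2::real" k] by simp
    also have "\<dots> = 2 powr real k * 2 powr (real k * e)" by (simp only: powr_powr)
    also have "\<dots> = 2 powr (real k + real k * e)" by (simp only: powr_add)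
    also have "\<dots> = 2 powr (-2*\<alpha> * real k)" unfolding e_def by (simp add: algebra_simps)
    also have "\<dots> = r powr real k" unfolding r_def by (simp only: powr_powr)
    also have "\<dots> = r^k" using r0 by (simp add: powr_realpow)
    finally show ?thesis .
  qed
  have sumsA: "summable (\<lambda>k. sqrt (A k))"
  proof (rule summable_comparison_test'[where g="\<lambda>k. (sqrt r)^k" and N=N])
    show "summable (\<lambda>k. (sqrt r)^k)" using r0 r1 by (intro summable_geometric) simp
    show "norm (sqrt (A k)) \<le> (sqrt r)^k" if "N \<le> k" for k
      using Adecay[OF that] A0[of k] by (simp add: real_sqrt_power[symmetric])
  qed
  have sumA: "summable A"
  proof (rule summable_comparison_test'[where g="\<lambda>k. r^k" and N=N])
    show "summable (\<lambda>k. r^k)" using r0 r1 by (intro summable_geometric) simp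
    show "norm (A k) \<le> r^k" if "N \<le> k" for k
      using Adecay[OF that] A0[of k] by simp
  qed
  define n :: nat where "n = nat \<lceil>suminf A\<rceil> + 1"
  have nbig: "suminf A < real n" unfolding n_def by linarith
  have n0: "0 < n" unfolding n_def by simp
  define L where "L = x2 - x1"
  have L0: "0 < L" unfolding L_def using assms by simp
  define J where "J m = {x1 + real m * L / real n ..< x1 + real (Suc m) * L / real n}" for m
  define g where "g m x = sqrt (real n / L) * indicator (J m) x" for m x
  have Jsub: "J m \<subseteq> I" if "m < n" for m
  proof -
    have "real m * L / real n \<ge> 0" using L0 by simp
    moreover have "real (Suc m) * L / real n \<le> L"
    proof -
      have "real (Suc m) \<le> real n" using that by simp
      then have "real (Suc m) * L \<le> real n * L" using L0 by (intro mult_right_mono) auto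
      then show ?thesis using n0 by (simp add: divide_le_eq mult.commute)
    qed
    ultimately show ?thesis unfolding J_def I_def L_def by auto
  qed
  have Jdisj: "disjoint_family_on J {..<n}"
    unfolding disjoint_family_on_def
  proof (intro ballI impI)
    fix m m' :: nat assume mm: "m \<noteq> m'"
    show "J m \<inter> J m' = {}"
    proof (rule ccontr)
      assume "J m \<inter> J m' \<noteq> {}"
      then obtain x where x: "x \<in> J m" "x \<in> J m'" by auto
      have key: "real a < real (Suc b)" if "x \<in> J a" "x \<in> J b" for a b
      proof (rule ccontr)
        assume "\<not> real a < real (Suc b)"
        then have "real (Suc b) \<le> real a" by simp
        then have "real (Suc b) * L / real n \<le> real a * L / real n"
          using L0 n0 by (intro divide_right_mono mult_right_mono) auto
        moreover have "real a * L / real n \<le> x - x1" "x - x1 < real (Suc b) * L / real n"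
          using that unfolding J_def by auto
        ultimately show False by linarith
      qed
      have "real m < real (Suc m')" "real m' < real (Suc m)" using key x by auto
      then show False using mm by simp
    qed
  qed
  have Jmeas: "measure lborel (J m) = L / real n" for m
  proof -
    have "x1 + real m * L / real n \<le> x1 + real (Suc m) * L / real n"
      using L0 n0 by (simp add: divide_right_mono mult_right_mono)
    then show ?thesis unfolding J_def by (simp add: add_divide_distrib algebra_simps)
  qed
  have Jle: "x1 + real m * L / real n \<le> x1 + real (Suc m) * L / real n" for m
    using L0 n0 by (simp add: divide_right_mono mult_right_mono)
  have Jem: "emeasure lborel (J m) < \<infinity>" for m unfolding J_def
    using emeasure_lborel_Ico[OF Jle[of m]] by simp
  have Jsets[measurable]: "J m \<in> sets lborel" for m unfolding J_def by simp
  have gsq: "(g m x)^2 = real n / L * indicator (J m) x" for m x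
    unfolding g_def using L0 by (simp add: power_mult_distrib indicator_def)
  have gL2: "L2 lborel (g m)" for m
  proof -
    have "integrable lborel (indicator (J m) :: real \<Rightarrow> real)" by (rule integrable_real_indicator[OF Jsets Jem])
    then have "integrable lborel (\<lambda>x. real n / L * indicator (J m) x)" by (rule integrable_mult_right)
    then show ?thesis unfolding L2_def gsq unfolding g_def by simp
  qed
  have g2: "(\<integral>x. (g m x)^2 \<partial>lborel) = 1" for m
    using Jem n0 L0 by (simp add: gsq Jmeas)
  have gS: "g m x = 0" if "x \<notin> {0..1}" "m < n" for m x
    using Jsub[OF that(2)] Isub that(1) unfolding g_def by (auto simp: indicator_def)
  define c where "c m j = (\<integral>x. g m x * H j x \<partial>lborel)" for m j
  have c1: "(c m j)^2 \<le> (\<integral>x. indicator (J m) x * (H j x)^2 \<partial>lborel)" if "1 \<le> j" for m j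
  proof -
    define u where "u x = indicator (J m) x * H j x" for x
    have uL2: "L2 lborel u"
    proof -
      have "integrable lborel (\<lambda>x. indicator (J m) x * (H j x)^2)"
        using integrable_mult_indicator[of "J m" lborel "\<lambda>x. (H j x)^2"] HL2[of j] Jsets[of m]
        unfolding L2_def by simp
      moreover have "(\<lambda>x. (u x)^2) = (\<lambda>x. indicator (J m) x * (H j x)^2)"
        unfolding u_def by (auto simp: indicator_def)
      moreover have "(\<lambda>x. indicator (J m) x * H j x) \<in> borel_measurable lborel"
        using HL2[of j] Jsets[of m] unfolding L2_def
        by (intro borel_measurable_times borel_measurable_indicator) auto
      ultimately show ?thesis unfolding L2_def u_def by simp
    qed
    have "c m j = (\<integral>x. u x * g m x \<partial>lborel)" unfolding c_def u_def g_def
      by (intro Bochner_Integration.integral_cong) (auto simp: indicator_def)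
    then have "(c m j)^2 \<le> (\<integral>x. (u x)^2 \<partial>lborel) * (\<integral>x. (g m x)^2 \<partial>lborel)"
      using L2_cs[OF uL2 gL2] by simp
    also have "\<dots> = (\<integral>x. indicator (J m) x * (H j x)^2 \<partial>lborel)"
      unfolding g2 u_def by (simp, intro Bochner_Integration.integral_cong) (auto simp: indicator_def power2_eq_square)
    finally show ?thesis .
  qed
  have indsum: "(\<Sum>m<n. indicator (J m) x) \<le> (indicator I x :: real)" for x
  proof (cases "\<exists>m0<n. x \<in> J m0")
    case True
    then obtain m0 where m0: "m0 < n" "x \<in> J m0" by auto
    have "(\<Sum>m<n. 1 * indicator (J m) x) = (1::real)"
      by (rule sum_indicator_disjoint_family[OF Jdisj m0(2)]) (use m0 in auto)
    moreover have "x \<in> I" using Jsub[OF m0(1)] m0(2) by auto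
    ultimately show ?thesis by simp
  next
    case False
    then have "(\<Sum>m<n. indicator (J m) x) = (0::real)" by (intro sum.neutral) auto
    then show ?thesis by simp
  qed
  have bessel: "(\<Sum>m<n. (c m j)^2) \<le> a j" if j1: "1 \<le> j" for j
  proof -
    have "(\<Sum>m<n. (c m j)^2) \<le> (\<Sum>m<n. (\<integral>x. indicator (J m) x * (H j x)^2 \<partial>lborel))"
      by (rule sum_mono) (rule c1[OF j1])
    also have "\<dots> = (\<integral>x. (\<Sum>m<n. indicator (J m) x * (H j x)^2) \<partial>lborel)"
      by (rule Bochner_Integration.integral_sum[symmetric])
         (use HL2[of j] Jsets in \<open>auto simp: L2_def intro!: integrable_real_mult_indicator[of _ _ "\<lambda>x. (H j x)^2", simplified mult.commute]\<close>)
    also have "\<dots> \<le> (\<integral>x. indicator I x * (H j x)^2 \<partial>lborel)"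
    proof (rule integral_mono)
      show "integrable lborel (\<lambda>x. \<Sum>m<n. indicator (J m) x * (H j x)^2)"
        using HL2[of j] Jsets unfolding L2_def
        by (intro Bochner_Integration.integrable_sum)
           (auto intro!: integrable_real_mult_indicator[of _ _ "\<lambda>x. (H j x)^2", simplified mult.commute])
      show "integrable lborel (\<lambda>x. indicator I x * (H j x)^2)"
        using HL2[of j] unfolding L2_def I_def
        by (auto intro!: integrable_real_mult_indicator[of _ _ "\<lambda>x. (H j x)^2", simplified mult.commute])
      fix x
      have "(\<Sum>m<n. indicator (J m) x * (H j x)^2) = (\<Sum>m<n. indicator (J m) x) * (H j x)^2"
        by (simp add: sum_distrib_right)
      also have "\<dots> \<le> indicator I x * (H j x)^2"
        by (rule mult_right_mono[OF indsum]) simp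
      finally show "(\<Sum>m<n. indicator (J m) x * (H j x)^2) \<le> indicator I x * (H j x)^2" .
    qed
    also have "\<dots> = a j" using aH[OF j1] by simp
    finally show ?thesis .
  qed
  have Dsub1: "j \<in> D k \<Longrightarrow> 1 \<le> j" for j k unfolding D_def by auto
  have pars: "(\<lambda>k. \<Sum>j\<in>D k. (c m j)^2) sums 1" if mn: "m < n" for m
  proof -
    have "(\<lambda>k. \<Sum>j\<in>{2^k..<2^Suc k}. (\<integral>x. g m x * H j x \<partial>lborel)^2) sums (\<integral>x. (g m x)^2 \<partial>lborel)"
    proof (rule parseval_block[OF gL2 cpl])
      show "g m x = 0" if "x \<notin> {0..1}" for x using gS[OF that mn] .
      show "summable (\<lambda>k. sqrt (\<Sum>j\<in>{2^k..<2^Suc k}. (\<integral>x. g m x * H j x \<partial>lborel)^2))"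
      proof (rule summable_comparison_test'[OF sumsA, of 0])
        fix k :: nat
        have "(\<Sum>j\<in>D k. (c m j)^2) \<le> A k" unfolding A_def
        proof (rule sum_mono)
          fix j assume "j \<in> D k"
          then have j1: "1 \<le> j" by (rule Dsub1)
          have "(c m j)^2 \<le> (\<Sum>m'<n. (c m' j)^2)"
            by (rule member_le_sum) (use mn in auto)
          then show "(c m j)^2 \<le> a j" using bessel[OF j1] by simp
        qed
        then show "norm (sqrt (\<Sum>j\<in>{2^k..<2^Suc k}. (\<integral>x. g m x * H j x \<partial>lborel)^2)) \<le> sqrt (A k)"
          unfolding D_def c_def by (simp add: sum_nonneg)
      qed
    qed (assumption)
    then show ?thesis unfolding g2 D_def c_def .
  qed
  have "(\<lambda>k. \<Sum>m<n. \<Sum>j\<in>D k. (c m j)^2) sums (\<Sum>m<n. 1)"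
    by (rule sums_sum) (rule pars, simp)
  then have sn: "(\<lambda>k. \<Sum>m<n. \<Sum>j\<in>D k. (c m j)^2) sums (real n)" by simp
  have "real n \<le> suminf A"
  proof (rule sums_le[OF _ sn summable_sums[OF sumA]])
    fix k
    have "(\<Sum>m<n. \<Sum>j\<in>D k. (c m j)^2) = (\<Sum>j\<in>D k. \<Sum>m<n. (c m j)^2)" by (rule sum.swap)
    also have "\<dots> \<le> A k" unfolding A_def by (rule sum_mono) (rule bessel[OF Dsub1])
    finally show "(\<Sum>m<n. \<Sum>j\<in>D k. (c m j)^2) \<le> A k" .
  qed
  then show False using nbig by simp
qed

end
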